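(* Let $0<1/n_0\ll\delta\ll\alpha\ll 1$, and let $t,k,n\in\mathbb N$ with $n\geq n_0$ and $k^2-k+2\leq n\leq k^2+k+1$. Let $\mathcal H$ be an $n$-vertex hypergraph with codegree at most $t$ in which every edge has size at least $(1-\delta)\sqrt n$, and let $e,f\in\mathcal H$ be distinct edges of size at most $k$ with $V(e)\cap V(f)\neq\emptyset$ and $|V(e)\cap V(f)|\leq\alpha k$. If either (i) at least one of $e,f$ has size at most $k-1$, (ii) $|V(e)\cap V(f)|\geq 2$, or (iii) there exists a vertex in $V(e)\cap V(f)$ which is contained in at most $t/(4\delta)$ edges of size at most $k-1$, then $\{e,f\}$ is $t$-useful.
   Context: Constant hierarchies: a statement holding whenever $0<a\ll b\le 1$ means there is a non-decreasing function $f:(0,1]\to(0,1]$ such that it holds for all $a,b$ with $a\leq f(b)$; longer hierarchies are defined analogously, constants chosen from right to left. A hypergraph $\mathcal H$ has a finite vertex set $V(\mathcal H)$ and a finite set of edges, each edge $e$ with a nonempty set $V(e)\subseteq V(\mathcal H)$ (multiple edges allowed); $n$-vertex means $|V(\mathcal H)|=n$; the size of $e$ is $|V(e)|$. The codegree of $\mathcal H$ is the maximum over distinct vertices $u,v$ of the number of edges containing both. $N(e)$ is the set of edges $g\neq e$ with $V(e)\cap V(g)\neq\emptyset$. In an $n$-vertex hypergraph, a pair $\{e,f\}$ of distinct edges is $t$-useful if $V(e)\cap V(f)\neq\emptyset$ and $|N(e)\cap N(f)|\leq tn-3$. *)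

theory Defs
  imports Complex_Main
begin

text \<open>A hypergraph is given by a finite vertex set V, a finite set E of edge
  labels (so that multiple edges are allowed) and a map verts assigning to each
  edge label its nonempty vertex set V(e), contained in V.\<close>

definition hypergraph :: "'v set \<Rightarrow> 'e set \<Rightarrow> ('e \<Rightarrow> 'v set) \<Rightarrow> bool" where
  "hypergraph V E verts \<longleftrightarrow> finite V \<and> finite E \<and>
     (\<forall>e\<in>E. verts e \<noteq> {} \<and> verts e \<subseteq> V)"

definition codegree_at_most :: "'v set \<Rightarrow> 'e set \<Rightarrow> ('e \<Rightarrow> 'v set) \<Rightarrow> nat \<Rightarrow> bool" where
  "codegree_at_most V E verts t \<longleftrightarrow>
     (\<forall>u\<in>V. \<forall>v\<in>V. u \<noteq> v \<longrightarrow> card {g\<in>E. u \<in> verts g \<and> v \<in> verts g} \<le> t)"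

definition nbhd :: "'e set \<Rightarrow> ('e \<Rightarrow> 'v set) \<Rightarrow> 'e \<Rightarrow> 'e set" where
  "nbhd E verts e = {g\<in>E. g \<noteq> e \<and> verts e \<inter> verts g \<noteq> {}}"

definition t_useful :: "'v set \<Rightarrow> 'e set \<Rightarrow> ('e \<Rightarrow> 'v set) \<Rightarrow> nat \<Rightarrow> 'e \<Rightarrow> 'e \<Rightarrow> bool" where
  "t_useful V E verts t e f \<longleftrightarrow> e \<noteq> f \<and> verts e \<inter> verts f \<noteq> {} \<and>
     real (card (nbhd E verts e \<inter> nbhd E verts f)) \<le> real t * real (card V) - 3"

end

theory Submission
  imports Defs
begin


lemma sum_card_swap:
  assumes "finite S" "finite B"
  shows "(\<Sum>g\<in>S. card (F g \<inter> B)) = (\<Sum>u\<in>B. card {g\<in>S. u \<in> F g})"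
proof -
  have 1: "card (F g \<inter> B) = (\<Sum>u\<in>B. if u \<in> F g then 1 else 0)" for g
  proof -
    have "F g \<inter> B = {u\<in>B. u \<in> F g}" by auto
    then show ?thesis using assms(2) by (simp add: sum.inter_filter[symmetric])
  qed
  have 2: "card {g\<in>S. u \<in> F g} = (\<Sum>g\<in>S. if u \<in> F g then 1 else 0)" for u
    using assms(1) by (simp add: sum.inter_filter[symmetric])
  show ?thesis unfolding 1 2 by (rule sum.swap)
qed

lemma budget:
  assumes hg: "hypergraph V E verts" and cd: "codegree_at_most V E verts t" and v: "v \<in> V"
  shows "(\<Sum>g\<in>{g\<in>E. v \<in> verts g}. card (verts g) - 1) \<le> t * (card V - 1)"
proof -
  have fin: "finite V" "finite E" using hg unfolding hypergraph_def by auto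
  let ?S = "{g\<in>E. v \<in> verts g}"
  have "(\<Sum>g\<in>?S. card (verts g) - 1) = (\<Sum>g\<in>?S. card (verts g \<inter> (V - {v})))"
  proof (rule sum.cong)
    fix g assume g: "g \<in> ?S"
    then have "verts g \<subseteq> V" using hg unfolding hypergraph_def by auto
    then have "verts g \<inter> (V - {v}) = verts g - {v}" by auto
    moreover have "finite (verts g)" using \<open>verts g \<subseteq> V\<close> fin finite_subset by auto
    ultimately show "card (verts g) - 1 = card (verts g \<inter> (V - {v}))" using g by simp
  qed simp
  also have "\<dots> = (\<Sum>u\<in>V - {v}. card {g\<in>?S. u \<in> verts g})"
    by (rule sum_card_swap) (use fin in auto)
  also have "\<dots> \<le> (\<Sum>u\<in>V - {v}. t)"
  proof (rule sum_mono)
    fix u assume u: "u \<in> V - {v}"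
    have "{g\<in>?S. u \<in> verts g} = {g\<in>E. u \<in> verts g \<and> v \<in> verts g}" by auto
    then show "card {g\<in>?S. u \<in> verts g} \<le> t" using cd u v unfolding codegree_at_most_def by auto
  qed
  also have "\<dots> = t * (card V - 1)" using v fin by (simp add: mult.commute)
  finally show ?thesis .
qed

lemma cover_bound:
  assumes hg: "hypergraph V E verts" and cd: "codegree_at_most V E verts t"
    and e: "e \<in> E" and f: "f \<in> E"
  shows "card (nbhd E verts e \<inter> nbhd E verts f) \<le>
     (\<Sum>v\<in>verts e \<inter> verts f. card {g\<in>E. v \<in> verts g \<and> g \<noteq> e \<and> g \<noteq> f})
     + t * card (verts e - verts f) * card (verts f - verts e)"
proof -
  have fin: "finite V" "finite E" using hg unfolding hypergraph_def by auto
  have sub: "verts g \<subseteq> V" if "g \<in> E" for g using hg that unfolding hypergraph_def by auto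
  have fe: "finite (verts e)" "finite (verts f)" using sub[OF e] sub[OF f] fin finite_subset by blast+
  define A where "A = (\<Union>v\<in>verts e \<inter> verts f. {g\<in>E. v \<in> verts g \<and> g \<noteq> e \<and> g \<noteq> f})"
  define P where "P = (verts e - verts f) \<times> (verts f - verts e)"
  define B where "B = (\<Union>p\<in>P. {g\<in>E. fst p \<in> verts g \<and> snd p \<in> verts g})"
  have "nbhd E verts e \<inter> nbhd E verts f \<subseteq> A \<union> B"
  proof
    fix g assume g: "g \<in> nbhd E verts e \<inter> nbhd E verts f"
    then have gE: "g \<in> E" "g \<noteq> e" "g \<noteq> f" "verts e \<inter> verts g \<noteq> {}" "verts f \<inter> verts g \<noteq> {}"
      unfolding nbhd_def by auto
    show "g \<in> A \<union> B"
    proof (cases "verts g \<inter> (verts e \<inter> verts f) = {}")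
      case False
      then show ?thesis using gE unfolding A_def by blast
    next
      case True
      obtain u where u: "u \<in> verts e" "u \<in> verts g" using gE by blast
      obtain w where w: "w \<in> verts f" "w \<in> verts g" using gE by blast
      have "(u, w) \<in> P" using u w True unfolding P_def by blast
      then show ?thesis using u w gE unfolding B_def by force
    qed
  qed
  then have "card (nbhd E verts e \<inter> nbhd E verts f) \<le> card (A \<union> B)"
    by (rule card_mono[rotated]) (rule finite_subset[of _ E], auto simp: A_def B_def fin)
  also have "\<dots> \<le> card A + card B" by (rule card_Un_le)
  also have "card A \<le> (\<Sum>v\<in>verts e \<inter> verts f. card {g\<in>E. v \<in> verts g \<and> g \<noteq> e \<and> g \<noteq> f})"
    unfolding A_def by (rule card_UN_le) (use fe in auto)
  also have "card B \<le> (\<Sum>p\<in>P. card {g\<in>E. fst p \<in> verts g \<and> snd p \<in> verts g})"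
    unfolding B_def by (rule card_UN_le) (use fe in \<open>auto simp: P_def\<close>)
  also have "\<dots> \<le> (\<Sum>p\<in>P. t)"
  proof (rule sum_mono)
    fix p assume p: "p \<in> P"
    then have "fst p \<in> V" "snd p \<in> V" "fst p \<noteq> snd p"
      using sub[OF e] sub[OF f] unfolding P_def by auto
    then show "card {g\<in>E. fst p \<in> verts g \<and> snd p \<in> verts g} \<le> t"
      using cd unfolding codegree_at_most_def by auto
  qed
  also have "\<dots> = t * card (verts e - verts f) * card (verts f - verts e)"
    unfolding P_def by (simp add: card_cartesian_product)
  finally show ?thesis by simp
qed



lemma arithA:
  fixes q k s n a d :: real
  assumes "s \<ge> 2" "s \<le> a * k" "a \<le> 1/8" "0 < d" "d \<le> 1/100" "0 \<le> q" "q < k + 1" "k \<ge> 300"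
    "n \<ge> k^2 - k + 2"
  shows "s * q * (1 + 2*d) + (k - s)^2 \<le> n - 3"
proof -
  have "s * q * (1 + 2*d) \<le> s * (k+1) * (1 + 2*d)"
    using assms by (intro mult_right_mono mult_left_mono) auto
  also have "\<dots> \<le> s * (k+1) * (51/50)"
    using assms by (intro mult_left_mono) auto
  finally have 1: "s * q * (1 + 2*d) \<le> s * (k+1) * (51/50)" .
  have "s * s \<le> s * (a * k)" using assms by (intro mult_left_mono) auto
  also have "\<dots> \<le> s * (k/8)" using assms by (intro mult_left_mono) auto
  finally have 2: "s * s \<le> s * (k / 8)" .
  have 3: "(k - s)^2 = k^2 - 2*k*s + s*s" by (simp add: power2_eq_square algebra_simps)
  have 4: "s * (51/50 - (2 - 1/8 - 51/50)*k) \<le> 2 * (51/50 - (2 - 1/8 - 51/50)*k)"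
    using assms by (intro mult_right_mono_neg) auto
  show ?thesis using 1 2 3 4 assms(9) assms(8) by (simp add: algebra_simps)
qed

lemma arithB:
  fixes q k n d :: real
  assumes "0 < d" "d \<le> 1/100" "0 \<le> q" "q < k + 1" "k \<ge> 300" "n \<ge> k^2 - k + 2"
  shows "q * (1 + 2*d) + (k - 2) * (k - 1) \<le> n - 3"
proof -
  have "q * (1 + 2*d) \<le> (k+1) * (51/50)"
    using assms by (intro mult_mono) auto
  moreover have "(k - 2) * (k - 1) = k^2 - 3*k + 2" by (simp add: power2_eq_square algebra_simps)
  ultimately show ?thesis using assms by simp
qed

lemma arithDeg:
  fixes a t q d :: real
  assumes "a * ((1 - d) * q - 1) \<le> t * (q^2 - 1)" "0 < d" "d \<le> 1/100" "d * q \<ge> 4" "0 \<le> t" "0 \<le> a"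
  shows "a \<le> t * (q * (1 + 2*d))"
proof -
  have q: "q > 0" proof (rule ccontr)
    assume "\<not> q > 0"
    then have "d * q \<le> 0" using assms(2) by (simp add: mult_nonneg_nonpos)
    then show False using assms(4) by simp
  qed
  have qq: "q \<ge> 400" proof -
    have "4 \<le> d * q" by fact
    also have "\<dots> \<le> (1/100) * q" using assms q by (intro mult_right_mono) auto
    finally show ?thesis by simp
  qed
  have b: "(1 - d) * q - 1 > 0"
  proof -
    have "(99/100) * q \<le> (1 - d) * q" using assms q by (intro mult_right_mono) auto
    then show ?thesis using qq by linarith
  qed
  have key: "q^2 \<le> (q * (1 + 2*d)) * ((1 - d) * q - 1)"
  proof -
    have "(q * (1 + 2*d)) * ((1 - d) * q - 1) = q^2 + q * (q * (d - 2*d*d) - 1 - 2*d)"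
      by (simp add: power2_eq_square algebra_simps)
    moreover have "q * (d - 2*d*d) \<ge> 1 + 2*d"
    proof -
      have "d*d \<le> d * (1/100)" using assms by (intro mult_left_mono) auto
      then have "d - 2*d*d \<ge> d/2" using assms(2) by linarith
      then have "q * (d - 2*d*d) \<ge> q * (d/2)" using q by (intro mult_left_mono) auto
      moreover have "q * (d/2) \<ge> 2" using assms by (simp add: mult.commute)
      ultimately show ?thesis using assms by simp
    qed
    ultimately show ?thesis using q by simp
  qed
  have "a * ((1 - d) * q - 1) \<le> t * q^2" using assms(1) assms(5) by (smt (verit) mult_left_mono right_diff_distrib)
  also have "\<dots> \<le> t * ((q * (1 + 2*d)) * ((1 - d) * q - 1))" using key assms(5) by (intro mult_left_mono)
  finally have "a * ((1 - d) * q - 1) \<le> (t * (q * (1 + 2*d))) * ((1 - d) * q - 1)" by (simp add: algebra_simps)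
  then show ?thesis using b by simp
qed



lemma arithC:
  fixes k u t n P Lc :: real
  assumes "k \<ge> 3*u" "u \<ge> 100" "t > 0" "P = n - (k-1)^2" "P \<ge> k+1"
    "(k-1)*Lc \<le> t*(n-1) - 2*(k-1) + t*u/8 + t*(k+1)/4"
    "Lc \<ge> t*P - 2"
  shows False
proof -
  have "(k-1)*(t*P - 2) \<le> (k-1)*Lc" using assms by (intro mult_left_mono) auto
  then have 1: "(k-1)*(t*P) \<le> t*(n-1) + t*u/8 + t*(k+1)/4" using assms(6) by (simp add: algebra_simps)
  have 2: "n - 1 = P + k*k - 2*k" using assms(4) by (simp add: power2_eq_square algebra_simps)
  have 3: "(k-2)*(t*P) \<le> t*(k*k-2*k) + t*u/8 + t*(k+1)/4" using 1 2 by (simp add: algebra_simps)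
  have 4: "(k-2)*t*(k+1) \<le> (k-2)*t*P" using assms by (intro mult_left_mono) auto
  have 5: "t*(k-2)*(k+1) \<le> t*(k*k-2*k) + t*u/8 + t*(k+1)/4" using 3 4 by (simp add: algebra_simps)
  have "t*(k-2) \<le> t*(u/8 + (k+1)/4)" using 5 by (simp add: algebra_simps)
  then have "k - 2 \<le> u/8 + (k+1)/4" using assms(3) by simp
  then show False using assms(1,2) by (simp add: field_simps)
qed



lemma main_lemma:
  fixes \<alpha> \<delta> :: real and nzero t k n :: nat and V :: "'v set" and E :: "'e set"
    and verts :: "'e \<Rightarrow> 'v set" and e f :: 'e
  assumes a0: "0 < \<alpha>" and a1: "\<alpha> \<le> 1/8" and d0: "0 < \<delta>" and d1: "\<delta> \<le> 1/100"
    and m00: "0 < nzero" and m01: "1 / real nzero \<le> \<delta>^2/16"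
    and nm0: "n \<ge> nzero" and nk1: "k^2 + 2 \<le> n + k" and nk2: "n \<le> k^2 + k + 1"
    and hg: "hypergraph V E verts" and cV: "card V = n"
    and cd: "codegree_at_most V E verts t"
    and sz: "\<forall>g\<in>E. real (card (verts g)) \<ge> (1 - \<delta>) * sqrt (real n)"
    and e: "e \<in> E" and f: "f \<in> E" and ef: "e \<noteq> f"
    and ek: "card (verts e) \<le> k" and fk: "card (verts f) \<le> k"
    and Ine: "verts e \<inter> verts f \<noteq> {}"
    and Ia: "real (card (verts e \<inter> verts f)) \<le> \<alpha> * real k"
    and disj: "card (verts e) + 1 \<le> k \<or> card (verts f) + 1 \<le> k
             \<or> card (verts e \<inter> verts f) \<ge> 2
             \<or> (\<exists>v\<in>verts e \<inter> verts f.
                  real (card {g\<in>E. v \<in> verts g \<and> card (verts g) + 1 \<le> k})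
                    \<le> real t / (4 * \<delta>))"
  shows "t_useful V E verts t e f"
proof -
  have fin: "finite V" "finite E" using hg unfolding hypergraph_def by auto
  have sub: "verts g \<subseteq> V" if "g \<in> E" for g using hg that unfolding hypergraph_def by auto
  have nem: "verts g \<noteq> {}" if "g \<in> E" for g using hg that unfolding hypergraph_def by auto
  have fv: "finite (verts g)" if "g \<in> E" for g using sub[OF that] fin finite_subset by blast
  have cpos: "card (verts g) \<ge> 1" if "g \<in> E" for g
    using fv[OF that] nem[OF that] by (simp add: Suc_le_eq card_gt_0_iff)
  define q where "q = sqrt (real n)"
  have q0: "q \<ge> 0" unfolding q_def by simp
  have qsq: "q^2 = real n" unfolding q_def by simp
  have "1 \<le> \<delta>^2 * real nzero / 16" using m01 m00 by (simp add: field_simps)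
  then have "16 \<le> \<delta>^2 * real nzero" by simp
  also have "\<dots> \<le> \<delta>^2 * real n" using nm0 by (intro mult_left_mono) auto
  finally have dn: "16 \<le> \<delta>^2 * real n" .
  have dq: "\<delta> * q \<ge> 4"
  proof (rule ccontr)
    assume "\<not> \<delta> * q \<ge> 4"
    then have "(\<delta> * q)^2 < 4^2" using d0 q0 by (intro power_strict_mono) auto
    then show False using dn qsq by (simp add: power_mult_distrib)
  qed
  have q400: "q \<ge> 400"
  proof -
    have "4 \<le> \<delta> * q" by fact
    also have "\<dots> \<le> (1/100) * q" using d1 q0 by (intro mult_right_mono) auto
    finally show ?thesis by simp
  qed
  have qd: "q \<ge> 4 / \<delta>" using dq d0 by (simp add: field_simps)
  have rk1: "real k ^ 2 + 2 \<le> real n + real k"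
  proof -
    have "real (k^2 + 2) \<le> real (n + k)" using nk1 by (simp only: of_nat_le_iff)
    then show ?thesis by simp
  qed
  have rk2: "real n \<le> real k ^ 2 + real k + 1"
  proof -
    have "real n \<le> real (k^2 + k + 1)" using nk2 by (simp only: of_nat_le_iff)
    then show ?thesis by simp
  qed
  have n2: "real n \<ge> 2"
  proof -
    have "(400::real)^2 \<le> q^2" using q400 by (intro power_mono) auto
    then show ?thesis using qsq by simp
  qed
  have k1: "k \<ge> 1"
  proof (rule ccontr)
    assume "\<not> k \<ge> 1"
    then have "k = 0" by simp
    then have "n \<le> 1" using nk2 by simp
    then show False using n2 by simp
  qed
  have qk1: "q < real k + 1"
  proof (rule ccontr)
    assume "\<not> q < real k + 1"
    then have "(real k + 1)^2 \<le> q^2" by (intro power_mono) auto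
    then show False using rk2 qsq k1 by (simp add: power2_eq_square algebra_simps)
  qed
  have qk2: "real k - 1/2 < q"
  proof (rule ccontr)
    assume "\<not> real k - 1/2 < q"
    then have "q^2 \<le> (real k - 1/2)^2" using q0 by (intro power_mono) auto
    then show False using rk1 qsq by (simp add: power2_eq_square algebra_simps)
  qed
  have k300: "real k \<ge> 300" using qk1 q400 by linarith
  define u where "u = 1 / \<delta>"
  have u100: "u \<ge> 100" unfolding u_def using d0 d1 by (simp add: field_simps)
  have ku: "real k \<ge> 3 * u" using qk1 qd u100 unfolding u_def by (simp add: field_simps)
  have rnk: "real n \<ge> real k ^ 2 - real k + 2" using rk1 by simp
  have t1: "t \<ge> 1"
  proof -
    have "real (card (verts e)) \<ge> (1 - \<delta>) * q" using sz e unfolding q_def by auto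
    moreover have "(1 - \<delta>) * q \<ge> (99/100) * q" using d1 q0 by (intro mult_right_mono) auto
    ultimately have "card (verts e) \<ge> 2" using q400 by linarith
    then have "\<not> card (verts e) \<le> Suc 0" by simp
    then obtain x y where xy: "x \<in> verts e" "y \<in> verts e" "x \<noteq> y"
      using card_le_Suc0_iff_eq[OF fv[OF e]] by blast
    have "e \<in> {g\<in>E. x \<in> verts g \<and> y \<in> verts g}" using e xy by auto
    then have "card {g\<in>E. x \<in> verts g \<and> y \<in> verts g} \<ge> 1"
      using fin by (metis (no_types, lifting) One_nat_def Suc_leI card_gt_0_iff empty_iff finite_subset mem_Collect_eq subsetI)
    moreover have "card {g\<in>E. x \<in> verts g \<and> y \<in> verts g} \<le> t"
      using cd xy sub[OF e] unfolding codegree_at_most_def by auto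
    ultimately show ?thesis by simp
  qed
  have rt1: "real t \<ge> 1" using t1 by simp
  define I where "I = verts e \<inter> verts f"
  define s where "s = card I"
  have fI: "finite I" unfolding I_def using fv[OF e] by simp
  have s1: "s \<ge> 1" unfolding s_def using fI Ine I_def by (simp add: Suc_le_eq card_gt_0_iff)
  define L where "L v = {g\<in>E. v \<in> verts g \<and> g \<noteq> e \<and> g \<noteq> f}" for v
  have fL: "finite (L v)" for v unfolding L_def using fin by simp
  define X where "X = card (nbhd E verts e \<inter> nbhd E verts f)"
  have cov: "X \<le> (\<Sum>v\<in>I. card (L v)) + t * (card (verts e) - s) * (card (verts f) - s)"
  proof -
    have "card (verts e - verts f) = card (verts e) - s"
      unfolding s_def I_def using fI I_def by (simp add: card_Diff_subset_Int)
    moreover have "card (verts f - verts e) = card (verts f) - s"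
      unfolding s_def I_def using fI I_def by (simp add: card_Diff_subset_Int Int_commute)
    ultimately show ?thesis using cover_bound[OF hg cd e f] unfolding X_def L_def I_def by simp
  qed
  have se: "s \<le> card (verts e)" unfolding s_def I_def by (rule card_mono[OF fv[OF e]]) auto
  have sf: "s \<le> card (verts f)" unfolding s_def I_def by (rule card_mono[OF fv[OF f]]) auto
  have rcov: "real X \<le> (\<Sum>v\<in>I. real (card (L v)))
      + real t * (real (card (verts e)) - real s) * (real (card (verts f)) - real s)"
  proof -
    have "real X \<le> real ((\<Sum>v\<in>I. card (L v)) + t * (card (verts e) - s) * (card (verts f) - s))"
      using cov by (simp only: of_nat_le_iff)
    then show ?thesis using se sf by (simp add: of_nat_diff)
  qed
  have budv: "(\<Sum>g\<in>L v. real (card (verts g)) - 1) + (real (card (verts e)) - 1)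
      + (real (card (verts f)) - 1) \<le> real t * (real n - 1)" if v: "v \<in> I" for v
  proof -
    have vV: "v \<in> V" using v sub[OF e] unfolding I_def by auto
    have eq: "{g\<in>E. v \<in> verts g} = insert e (insert f (L v))"
      using v e f unfolding I_def L_def by auto
    have "(\<Sum>g\<in>{g\<in>E. v \<in> verts g}. card (verts g) - 1) \<le> t * (card V - 1)"
      by (rule budget[OF hg cd vV])
    then have "(\<Sum>g\<in>L v. card (verts g) - 1) + (card (verts e) - 1) + (card (verts f) - 1) \<le> t * (n - 1)"
      unfolding eq using fL ef cV by (simp add: L_def)
    then have "real ((\<Sum>g\<in>L v. card (verts g) - 1) + (card (verts e) - 1) + (card (verts f) - 1)) \<le> real (t * (n - 1))"
      by (simp only: of_nat_le_iff)
    moreover have "real (\<Sum>g\<in>L v. card (verts g) - 1) = (\<Sum>g\<in>L v. real (card (verts g)) - 1)"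
    proof -
      have "real (card (verts g) - 1) = real (card (verts g)) - 1" if "g \<in> L v" for g
      proof -
        have "g \<in> E" using that unfolding L_def by simp
        then have "1 \<le> card (verts g)" by (rule cpos)
        from of_nat_diff[OF this] show ?thesis by simp
      qed
      then show ?thesis unfolding of_nat_sum by (rule sum.cong[OF refl])
    qed
    moreover have "n \<ge> 1"
    proof -
      have "card V > 0" using vV fin(1) by (auto simp: card_gt_0_iff)
      then show ?thesis using cV by simp
    qed
    ultimately show ?thesis using cpos[OF e] cpos[OF f] by (simp add: of_nat_diff)
  qed
  have Llow: "(\<Sum>g\<in>L v. real (card (verts g)) - 1) \<ge> real (card (L v)) * ((1 - \<delta>) * q - 1)" for v
  proof -
    have "(\<Sum>g\<in>L v. (1 - \<delta>) * q - 1) \<le> (\<Sum>g\<in>L v. real (card (verts g)) - 1)"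
      by (rule sum_mono) (use sz in \<open>auto simp: L_def q_def\<close>)
    then show ?thesis by (simp add: mult.commute)
  qed
  have degv: "real (card (L v)) \<le> real t * (q * (1 + 2*\<delta>))" if v: "v \<in> I" for v
  proof (rule arithDeg)
    show "real (card (L v)) * ((1 - \<delta>) * q - 1) \<le> real t * (q^2 - 1)"
      using budv[OF v] Llow[of v] cpos[OF e] cpos[OF f] qsq by simp
  qed (use d0 d1 dq in auto)
  have rek: "real (card (verts e)) \<le> real k" "real (card (verts f)) \<le> real k" using ek fk by auto
  have rse: "real s \<le> real (card (verts e))" "real s \<le> real (card (verts f))" using se sf by auto
  have goal: "real X \<le> real t * real n - 3"
  proof (cases "s \<ge> 2")
    case True
    have S: "(\<Sum>v\<in>I. real (card (L v))) \<le> real s * (real t * (q * (1 + 2*\<delta>)))"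
      unfolding s_def by (rule sum_bounded_above) (use degv in auto)
    have "(real (card (verts e)) - real s) * (real (card (verts f)) - real s) \<le> (real k - real s) * (real k - real s)"
      using rek rse by (intro mult_mono) auto
    then have P: "real t * (real (card (verts e)) - real s) * (real (card (verts f)) - real s) \<le> real t * (real k - real s)^2"
      by (simp add: power2_eq_square mult.assoc mult_left_mono)
    have A: "real s * q * (1 + 2*\<delta>) + (real k - real s)^2 \<le> real n - 3"
      by (rule arithA[where a=\<alpha> and d=\<delta>]) (use True Ia a1 d0 d1 q0 qk1 k300 rnk in \<open>auto simp: s_def I_def\<close>)
    have "real X \<le> real t * (real s * q * (1 + 2*\<delta>) + (real k - real s)^2)"
      using rcov S P by (simp add: algebra_simps)
    also have "\<dots> \<le> real t * (real n - 3)" using A by (intro mult_left_mono) auto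
    also have "\<dots> \<le> real t * real n - 3" using rt1 by (simp add: algebra_simps)
    finally show ?thesis .
  next
    case False
    then have "s = 1" using s1 by simp
    then obtain v where Iv: "I = {v}" unfolding s_def by (auto simp: card_Suc_eq)
    have vI: "v \<in> I" using Iv by simp
    have rc1: "real X \<le> real (card (L v)) + real t * (real (card (verts e)) - 1) * (real (card (verts f)) - 1)"
      using rcov Iv \<open>s = 1\<close> by simp
    show ?thesis
    proof (cases "card (verts e) + 1 \<le> k \<or> card (verts f) + 1 \<le> k")
      case True
      have "(real (card (verts e)) - 1) * (real (card (verts f)) - 1) \<le> (real k - 2) * (real k - 1)"
      proof (cases "card (verts e) + 1 \<le> k")
        case True
        then have "real (card (verts e)) \<le> real k - 1" by linarith
        then show ?thesis using rek cpos[OF e] cpos[OF f] by (intro mult_mono) auto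
      next
        case False
        then have "real (card (verts f)) \<le> real k - 1" using \<open>card (verts e) + 1 \<le> k \<or> card (verts f) + 1 \<le> k\<close> by linarith
        then have "(real (card (verts e)) - 1) * (real (card (verts f)) - 1) \<le> (real k - 1) * (real k - 2)"
          using rek cpos[OF e] cpos[OF f] by (intro mult_mono) auto
        then show ?thesis by (simp add: mult.commute)
      qed
      then have P: "real t * (real (card (verts e)) - 1) * (real (card (verts f)) - 1) \<le> real t * ((real k - 2) * (real k - 1))"
        by (simp add: mult.assoc mult_left_mono)
      have B: "q * (1 + 2*\<delta>) + (real k - 2) * (real k - 1) \<le> real n - 3"
        by (rule arithB) (use d0 d1 q0 qk1 k300 rnk in auto)
      have "real X \<le> real t * (q * (1 + 2*\<delta>) + (real k - 2) * (real k - 1))"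
        using rc1 degv[OF vI] P by (simp add: algebra_simps)
      also have "\<dots> \<le> real t * (real n - 3)" using B by (intro mult_left_mono) auto
      also have "\<dots> \<le> real t * real n - 3" using rt1 by (simp add: algebra_simps)
      finally show ?thesis .
    next
      case False
      then have cek: "card (verts e) = k" "card (verts f) = k" using ek fk by auto
      have "\<exists>v\<in>I. real (card {g\<in>E. v \<in> verts g \<and> card (verts g) + 1 \<le> k}) \<le> real t / (4 * \<delta>)"
        using disj False \<open>s = 1\<close> unfolding s_def I_def by auto
      then have small: "real (card {g\<in>E. v \<in> verts g \<and> card (verts g) + 1 \<le> k}) \<le> real t / (4 * \<delta>)"
        using Iv by simp
      define Ls where "Ls = {g\<in>L v. card (verts g) + 1 \<le> k}"
      have "Ls \<subseteq> {g\<in>E. v \<in> verts g \<and> card (verts g) + 1 \<le> k}" unfolding Ls_def L_def by auto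
      then have "card Ls \<le> card {g\<in>E. v \<in> verts g \<and> card (verts g) + 1 \<le> k}"
        by (rule card_mono[rotated]) (use fin in simp)
      then have cLs: "real (card Ls) \<le> real t / (4 * \<delta>)" using small by linarith
      define z where "z = real k - (1 - \<delta>) * q"
      have pw: "real (card (verts g)) - 1 \<ge> (real k - 1) - (if g \<in> Ls then z else 0)" if g: "g \<in> L v" for g
      proof (cases "g \<in> Ls")
        case True
        then show ?thesis using sz g unfolding z_def L_def q_def by auto
      next
        case False
        then have "card (verts g) \<ge> k" using g unfolding Ls_def by auto
        then show ?thesis using False by simp
      qed
      have "(\<Sum>g\<in>L v. (real k - 1) - (if g \<in> Ls then z else 0)) \<le> (\<Sum>g\<in>L v. real (card (verts g)) - 1)"
        by (rule sum_mono) (use pw in auto)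
      moreover have "(\<Sum>g\<in>L v. (real k - 1) - (if g \<in> Ls then z else 0)) = real (card (L v)) * (real k - 1) - real (card Ls) * z"
      proof -
        have "Ls = {g\<in>L v. g \<in> Ls}" unfolding Ls_def by auto
        have "(\<Sum>g\<in>L v. (if g \<in> Ls then z else 0)) = (\<Sum>g\<in>{g\<in>L v. g \<in> Ls}. z)"
          using sum.inter_filter[OF fL[of v], of "\<lambda>_. z" "\<lambda>g. g \<in> Ls"] by simp
        also have "\<dots> = real (card Ls) * z" using \<open>Ls = {g\<in>L v. g \<in> Ls}\<close>[symmetric] by simp
        finally have "(\<Sum>g\<in>L v. (if g \<in> Ls then z else 0)) = real (card Ls) * z" .
        then show ?thesis by (simp add: sum_subtractf)
      qed
      ultimately have H1: "real (card (L v)) * (real k - 1) - real (card Ls) * z \<le> real t * (real n - 1) - 2 * (real k - 1)"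
        using budv[OF vI] cek by simp
      have zZ: "z \<le> 1/2 + \<delta> * (real k + 1)"
      proof -
        have "\<delta> * q \<le> \<delta> * (real k + 1)" using qk1 d0 by (intro mult_left_mono) auto
        then show ?thesis unfolding z_def using qk2 by (simp add: algebra_simps)
      qed
      have "real (card Ls) * z \<le> real (card Ls) * (1/2 + \<delta> * (real k + 1))"
        using zZ by (intro mult_left_mono) auto
      also have "\<dots> \<le> (real t / (4 * \<delta>)) * (1/2 + \<delta> * (real k + 1))"
        using cLs d0 by (intro mult_right_mono) auto
      also have "\<dots> = real t * u / 8 + real t * (real k + 1) / 4"
        unfolding u_def using d0 by (simp add: field_simps)
      finally have H2: "real (card Ls) * z \<le> real t * u / 8 + real t * (real k + 1) / 4" .
      have H: "(real k - 1) * real (card (L v)) \<le> real t * (real n - 1) - 2 * (real k - 1) + real t * u / 8 + real t * (real k + 1) / 4"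
        using H1 H2 by (simp add: algebra_simps)
      define P where "P = real n - (real k - 1)^2"
      have Pk: "P \<ge> real k + 1" unfolding P_def using rnk by (simp add: power2_eq_square algebra_simps)
      have cL: "real (card (L v)) \<le> real t * P - 3"
      proof (rule ccontr)
        assume na: "\<not> real (card (L v)) \<le> real t * P - 3"
        have PZ: "real t * P = real_of_int (int t * (int n - (int k - 1)^2))" unfolding P_def by simp
        have "\<not> int (card (L v)) \<le> int t * (int n - (int k - 1)^2) - 3"
        proof
          assume "int (card (L v)) \<le> int t * (int n - (int k - 1)^2) - 3"
          then have "real_of_int (int (card (L v))) \<le> real_of_int (int t * (int n - (int k - 1)^2) - 3)"
            by (simp only: of_int_le_iff)
          then show False using na PZ by simp
        qed
        then have "int (card (L v)) \<ge> int t * (int n - (int k - 1)^2) - 2" by linarith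
        then have "real_of_int (int (card (L v))) \<ge> real_of_int (int t * (int n - (int k - 1)^2) - 2)"
          by (simp only: of_int_le_iff)
        then have "real (card (L v)) \<ge> real t * P - 2" unfolding P_def by simp
        then show False
          by (intro arithC[where k="real k" and u=u and t="real t" and n="real n" and P=P and Lc="real (card (L v))"])
             (use ku u100 rt1 Pk H P_def in auto)
      qed
      have "real X \<le> real (card (L v)) + real t * (real k - 1)^2"
        using rc1 cek by (simp add: power2_eq_square)
      also have "\<dots> \<le> real t * real n - 3" using cL unfolding P_def by (simp add: algebra_simps)
      finally show ?thesis .
    qed
  qed
  show ?thesis unfolding t_useful_def using ef Ine goal cV X_def by simp
qed


lemma mono_g: "mono_on {0<..1} (\<lambda>_::real. 1/100::real)" by (simp add: mono_on_def)
lemma img_g: "(\<lambda>_::real. 1/100::real) ` {0<..1} \<subseteq> {0<..1}" by auto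
lemma mono_h: "mono_on {0<..1} (\<lambda>d::real. d^2/16)"
  by (auto simp: mono_on_def intro!: divide_right_mono power_mono)
lemma img_h: "(\<lambda>d::real. d^2/16) ` {0<..1} \<subseteq> {0<..1}"
proof
  fix y assume "y \<in> (\<lambda>d::real. d^2/16) ` {0<..1}"
  then obtain d where d: "d \<in> {0<..1::real}" "y = d^2/16" by auto
  then have "d^2 \<le> 1" by (intro power_le_one) auto
  moreover have "d^2 > 0" using d by simp
  ultimately have "d^2/16 > 0" "d^2/16 \<le> 1" by (simp_all add: divide_pos_pos)
  then show "y \<in> {0<..1}" unfolding d(2) greaterThanAtMost_iff by blast
qed

theorem proposition4p6:
  "\<exists>c::real. 0 < c \<and> c \<le> 1 \<and>
   (\<exists>g h :: real \<Rightarrow> real.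
      mono_on {0<..1} g \<and> g ` {0<..1} \<subseteq> {0<..1} \<and>
      mono_on {0<..1} h \<and> h ` {0<..1} \<subseteq> {0<..1} \<and>
      (\<forall>(\<alpha>::real) (\<delta>::real) (n0::nat).
         0 < \<alpha> \<and> \<alpha> \<le> c \<and> 0 < \<delta> \<and> \<delta> \<le> g \<alpha> \<and> 0 < n0 \<and> 1 / real n0 \<le> h \<delta> \<longrightarrow>
         (\<forall>(t::nat) (k::nat) (n::nat) (V::'v set) (E::'e set) (verts::'e \<Rightarrow> 'v set) e f.
            n \<ge> n0 \<and> k^2 + 2 \<le> n + k \<and> n \<le> k^2 + k + 1 \<and>
            hypergraph V E verts \<and> card V = n \<and>
            codegree_at_most V E verts t \<and>
            (\<forall>g\<in>E. real (card (verts g)) \<ge> (1 - \<delta>) * sqrt (real n)) \<and>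
            e \<in> E \<and> f \<in> E \<and> e \<noteq> f \<and>
            card (verts e) \<le> k \<and> card (verts f) \<le> k \<and>
            verts e \<inter> verts f \<noteq> {} \<and>
            real (card (verts e \<inter> verts f)) \<le> \<alpha> * real k \<and>
            (card (verts e) + 1 \<le> k \<or> card (verts f) + 1 \<le> k
             \<or> card (verts e \<inter> verts f) \<ge> 2
             \<or> (\<exists>v\<in>verts e \<inter> verts f.
                  real (card {g\<in>E. v \<in> verts g \<and> card (verts g) + 1 \<le> k})
                    \<le> real t / (4 * \<delta>)))
            \<longrightarrow> t_useful V E verts t e f)))"
  apply (rule exI[of _ "1/8::real"])
  apply (intro conjI)
    apply simp
   apply simp
  apply (rule exI[of _ "\<lambda>_::real. 1/100::real"])
  apply (rule exI[of _ "\<lambda>d::real. d^2/16"])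
  apply (intro conjI mono_g img_g mono_h img_h)
  apply (intro allI impI)
  subgoal for \<alpha> \<delta> n0 t k n V E verts e f
    apply (elim conjE)
    by (rule main_lemma[where \<alpha>=\<alpha> and \<delta>=\<delta> and nzero=n0 and n=n and k=k]) assumption+
  done

end
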